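(* Let $S_1,\ldots,S_m$ be propositional formulae ($m\ge 1$). The lexicographic orders $[S_1,\ldots,S_{m-1},S_m]$ and $[S_1,\ldots,S_{m-1}]$ are equivalent if and only if $S_m$ is equivalent to the disjunction of some (possibly none) of the formulae $Q = (B_1 \equiv S_1) \wedge \cdots \wedge (B_{m-1} \equiv S_{m-1})$, where each $B_i$ is either $\top$ or $\bot$.
   Context: Formulae are propositional over a finite alphabet; models are truth assignments. For a formula $F$, the order induced by $F$ is: $I \leq_F J$ iff $I \models F$ or $J \not\models F$. For a finite sequence of formulae $S=[S_1,\ldots,S_m]$, the lexicographic order $\leq_S$ is defined recursively: $I \leq_S J$ holds iff either $S=[]$, or ($I \leq_{S_1} J$ and (either $J \not\leq_{S_1} I$ or $I \leq_R J$)), where $R=[S_2,\ldots,S_m]$. Two sequences $S$ and $R$ are equivalent, written $S\equiv R$, if $I \leq_S J$ and $I\leq_R J$ coincide for all pairs of models $I,J$. The empty disjunction is $\bot$. *)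

theory Defs
  imports Main
begin

datatype 'a form = Atom 'a | Top | Bot | Neg "'a form"
  | Conj "'a form" "'a form" | Disj "'a form" "'a form" | Iff "'a form" "'a form"

fun sat :: "('a \<Rightarrow> bool) \<Rightarrow> 'a form \<Rightarrow> bool" where
  "sat I (Atom x) = I x"
| "sat I Top = True"
| "sat I Bot = False"
| "sat I (Neg F) = (\<not> sat I F)"
| "sat I (Conj F G) = (sat I F \<and> sat I G)"
| "sat I (Disj F G) = (sat I F \<or> sat I G)"
| "sat I (Iff F G) = (sat I F = sat I G)"

definition form_equiv :: "'a form \<Rightarrow> 'a form \<Rightarrow> bool" where
  "form_equiv F G = (\<forall>I. sat I F = sat I G)"

definition le_form :: "'a form \<Rightarrow> ('a \<Rightarrow> bool) \<Rightarrow> ('a \<Rightarrow> bool) \<Rightarrow> bool" where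
  "le_form F I J = (sat I F \<or> \<not> sat J F)"

fun le_lex :: "'a form list \<Rightarrow> ('a \<Rightarrow> bool) \<Rightarrow> ('a \<Rightarrow> bool) \<Rightarrow> bool" where
  "le_lex [] I J = True"
| "le_lex (F # R) I J = (le_form F I J \<and> (\<not> le_form F J I \<or> le_lex R I J))"

definition lex_equiv :: "'a form list \<Rightarrow> 'a form list \<Rightarrow> bool" where
  "lex_equiv S R = (\<forall>I J. le_lex S I J = le_lex R I J)"

definition Conjs :: "'a form list \<Rightarrow> 'a form" where
  "Conjs Fs = foldr Conj Fs Top"

definition Disjs :: "'a form list \<Rightarrow> 'a form" where
  "Disjs Fs = foldr Disj Fs Bot"

definition Qform :: "bool list \<Rightarrow> 'a form list \<Rightarrow> 'a form" where
  "Qform Bs Ss = Conjs (map2 (\<lambda>b s. Iff (if b then Top else Bot) s) Bs Ss)"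

end

theory Submission
  imports Defs
begin

lemma sat_Qform:
  "length Bs = length S \<Longrightarrow> sat I (Qform Bs S) \<longleftrightarrow> Bs = map (sat I) S"
proof (induction S arbitrary: Bs)
  case Nil then show ?case by (simp add: Qform_def Conjs_def)
next
  case (Cons s S)
  then obtain b Bs' where "Bs = b # Bs'" "length Bs' = length S" by (cases Bs) auto
  with Cons.IH[of Bs'] show ?case by (auto simp: Qform_def Conjs_def)
qed

lemma sat_Disjs: "sat I (Disjs Fs) \<longleftrightarrow> (\<exists>F\<in>set Fs. sat I F)"
  by (induction Fs) (auto simp: Disjs_def)

lemma le_lex_snoc:
  "le_lex (S @ [F]) I J = (if map (sat I) S = map (sat J) S then le_form F I J else le_lex S I J)"
  by (induction S) (auto simp: le_form_def)

lemma le_lex_same: "map (sat I) S = map (sat J) S \<Longrightarrow> le_lex S I J"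
  by (induction S) (auto simp: le_form_def)

lemma lex_equiv_iff:
  "lex_equiv (S @ [Sm]) S \<longleftrightarrow> (\<forall>I J. map (sat I) S = map (sat J) S \<longrightarrow> sat I Sm = sat J Sm)"
proof
  assume A: "lex_equiv (S @ [Sm]) S"
  show "\<forall>I J. map (sat I) S = map (sat J) S \<longrightarrow> sat I Sm = sat J Sm"
  proof (intro allI impI)
    fix I J assume e: "map (sat I) S = map (sat J) S"
    have 1: "le_form Sm I J" using A e le_lex_same[OF e] unfolding lex_equiv_def le_lex_snoc by metis
    have e': "map (sat J) S = map (sat I) S" using e by simp
    have 2: "le_form Sm J I" using A e' le_lex_same[OF e'] unfolding lex_equiv_def le_lex_snoc by metis
    show "sat I Sm = sat J Sm" using 1 2 unfolding le_form_def by blast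
  qed
next
  assume B: "\<forall>I J. map (sat I) S = map (sat J) S \<longrightarrow> sat I Sm = sat J Sm"
  show "lex_equiv (S @ [Sm]) S" unfolding lex_equiv_def le_lex_snoc
  proof (intro allI)
    fix I J
    show "(if map (sat I) S = map (sat J) S then le_form Sm I J else le_lex S I J) = le_lex S I J"
      using B le_lex_same[of I S J] unfolding le_form_def by metis
  qed
qed

theorem theorem3:
  fixes S :: "'a::finite form list" and Sm :: "'a form"
  shows "lex_equiv (S @ [Sm]) S \<longleftrightarrow>
    (\<exists>Bss. (\<forall>Bs\<in>set Bss. length Bs = length S) \<and>
           form_equiv Sm (Disjs (map (\<lambda>Bs. Qform Bs S) Bss)))"
proof
  assume "lex_equiv (S @ [Sm]) S"
  hence H: "\<And>I J. map (sat I) S = map (sat J) S \<Longrightarrow> sat I Sm = sat J Sm"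
    by (simp add: lex_equiv_iff)
  let ?A = "{v. \<exists>I. sat I Sm \<and> v = map (sat I) S}"
  have sub: "?A \<subseteq> {v. set v \<subseteq> (UNIV::bool set) \<and> length v = length S}" by auto
  have "finite {v. set v \<subseteq> (UNIV::bool set) \<and> length v = length S}"
    by (rule finite_lists_length_eq) simp
  hence "finite ?A" using sub by (rule finite_subset[rotated])
  then have "\<exists>xs. set xs = ?A" by (rule finite_list)
  then obtain Bss where Bss: "set Bss = ?A" by (rule exE)
  show "\<exists>Bss. (\<forall>Bs\<in>set Bss. length Bs = length S) \<and>
           form_equiv Sm (Disjs (map (\<lambda>Bs. Qform Bs S) Bss))"
  proof (intro exI conjI)
    show L: "\<forall>Bs\<in>set Bss. length Bs = length S" unfolding Bss by clarsimp
    show "form_equiv Sm (Disjs (map (\<lambda>Bs. Qform Bs S) Bss))"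
      unfolding form_equiv_def
    proof
      fix I
      have "sat I (Disjs (map (\<lambda>Bs. Qform Bs S) Bss)) \<longleftrightarrow> (\<exists>Bs\<in>set Bss. Bs = map (sat I) S)"
        using L sat_Qform[of _ S I] by (simp add: sat_Disjs)
      also have "\<dots> \<longleftrightarrow> sat I Sm"
      proof
        assume "\<exists>Bs\<in>set Bss. Bs = map (sat I) S"
        then obtain Bs where Bs: "Bs \<in> set Bss" "Bs = map (sat I) S" by (elim bexE)
        have "Bs \<in> ?A" using Bs(1) Bss by simp
        then have "\<exists>J. sat J Sm \<and> Bs = map (sat J) S" by simp
        then obtain J where J: "sat J Sm" "Bs = map (sat J) S" by (elim exE conjE)
        show "sat I Sm" using H[of I J] J Bs(2) by simp
      next
        assume "sat I Sm" thus "\<exists>Bs\<in>set Bss. Bs = map (sat I) S" using Bss by blast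
      qed
      finally show "sat I Sm = sat I (Disjs (map (\<lambda>Bs. Qform Bs S) Bss))" by simp
    qed
  qed
next
  assume "\<exists>Bss. (\<forall>Bs\<in>set Bss. length Bs = length S) \<and>
           form_equiv Sm (Disjs (map (\<lambda>Bs. Qform Bs S) Bss))"
  then obtain Bss where L: "\<forall>Bs\<in>set Bss. length Bs = length S"
    and E: "form_equiv Sm (Disjs (map (\<lambda>Bs. Qform Bs S) Bss))" by blast
  have P: "\<And>I. sat I Sm \<longleftrightarrow> (\<exists>Bs\<in>set Bss. Bs = map (sat I) S)"
    using E L by (auto simp: form_equiv_def sat_Disjs sat_Qform)
  show "lex_equiv (S @ [Sm]) S" unfolding lex_equiv_iff
  proof (intro allI impI)
    fix I J assume e: "map (sat I) S = map (sat J) S"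
    show "sat I Sm = sat J Sm" using P[of I] P[of J] e by simp
  qed
qed

end
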